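(* Let $\mathcal B$ be a BMC with $\mathbf c^*_q<\infty$ for all $q\in\mathcal T$, and consider the Q-learning process with learning rates $\lambda_i\in[0,1]$ satisfying $\sum_{i=0}^\infty\lambda_i=\infty$ and $\sum_{i=0}^\infty\lambda_i^2<\infty$, and a fixed selection distribution with $p_q\ge p_{\min}>0$ for all $q$. Then for every initial vector $Q_0\ge\mathbf 0$, $\lim_{i\to\infty}Q_i=\mathbf c^*$ almost surely.
   Context: A branching Markov chain (BMC) is $\mathcal B=(\mathcal T,p,c)$ with $\mathcal T$ a finite set of types, $p(q)$ for each $q\in\mathcal T$ a probability distribution with finite support over finite lists $\mathcal T^*$ of types (the offspring distribution), and $c:\mathcal T\to\mathbb R_{>0}$ a strictly positive cost. For a list $\alpha$, $|\alpha|$ is its length and $\alpha_i$ its $i$-th element. $\mathbf c^*_q\in[0,\infty]$ denotes the expected total cost until extinction starting from the single entity $q$; equivalently $\mathbf c^*$ is the least fixed point in $[0,\infty]^{\mathcal T}$ of $F(\mathbf x)_q=c(q)+\sum_\alpha p(q)(\alpha)\sum_{i=1}^{|\alpha|}\mathbf x_{\alpha_i}$. Q-learning process for a BMC: given deterministic learning rates $\lambda_i\in[0,1]$, a probability distribution $(p_q)_{q\in\mathcal T}$ and an initial vector $Q_0\in\mathbb R_{\ge0}^{\mathcal T}$, at each step $i=0,1,2,\dots$ a type $q_i$ is selected with probability $p_{q_i}$ independently of all previous randomness, then a list $\beta^i$ is drawn from $p(q_i)$ independently, and $Q_{i+1}(q_i)=(1-\lambda_i)Q_i(q_i)+\lambda_i\big(c(q_i)+\sum_{j=1}^{|\beta^i|}Q_i(\beta^i_j)\big)$,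 while $Q_{i+1}(q)=Q_i(q)$ for $q\ne q_i$. *)

theory Defs
  imports "HOL-Probability.Probability"
begin

definition bmc :: "('a::finite \<Rightarrow> 'a list pmf) \<Rightarrow> ('a \<Rightarrow> real) \<Rightarrow> bool" where
  "bmc p c \<longleftrightarrow> (\<forall>q. finite (set_pmf (p q))) \<and> (\<forall>q. c q > 0)"

definition bmc_F :: "('a::finite \<Rightarrow> 'a list pmf) \<Rightarrow> ('a \<Rightarrow> real) \<Rightarrow> ('a \<Rightarrow> ennreal) \<Rightarrow> ('a \<Rightarrow> ennreal)" where
  "bmc_F p c x = (\<lambda>q. ennreal (c q) +
      (\<Sum>\<alpha>\<in>set_pmf (p q). ennreal (pmf (p q) \<alpha>) * (\<Sum>i<length \<alpha>. x (\<alpha> ! i))))"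

text \<open>Expected total cost until extinction: least fixed point of F.\<close>
definition cstar :: "('a::finite \<Rightarrow> 'a list pmf) \<Rightarrow> ('a \<Rightarrow> real) \<Rightarrow> 'a \<Rightarrow> ennreal" where
  "cstar p c = lfp (bmc_F p c)"

definition step_dist :: "'a pmf \<Rightarrow> ('a \<Rightarrow> 'a list pmf) \<Rightarrow> ('a \<times> 'a list) pmf" where
  "step_dist sel p = bind_pmf sel (\<lambda>q. map_pmf (\<lambda>\<beta>. (q, \<beta>)) (p q))"

text \<open>The Q-learning iterates, as a function of the i.i.d. sequence of samples \<omega>.\<close>
fun Qlearn :: "(nat \<Rightarrow> real) \<Rightarrow> ('a \<Rightarrow> real) \<Rightarrow> ('a \<Rightarrow> real) \<Rightarrow> ('a \<times> 'a list) stream \<Rightarrow> nat \<Rightarrow> ('a \<Rightarrow> real)" where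
  "Qlearn lr c Q0 \<omega> 0 = Q0"
| "Qlearn lr c Q0 \<omega> (Suc i) =
     (let Qi = Qlearn lr c Q0 \<omega> i; q = fst (\<omega> !! i); \<beta> = snd (\<omega> !! i)
      in Qi(q := (1 - lr i) * Qi q + lr i * (c q + (\<Sum>j<length \<beta>. Qi (\<beta> ! j)))))"

end

theory Submission
  imports Defs
begin



lemma sets_S: "sets (stream_space (measure_pmf (D::'b pmf))) = sets (stream_space (count_space UNIV))"
  by (rule sets_stream_space_cong) simp

lemma space_S[simp]: "space (stream_space (measure_pmf (D::'b pmf))) = UNIV"
  by (simp add: space_stream_space)

lemma S_one[simp]: "emeasure (stream_space (measure_pmf (D::'b pmf))) UNIV = 1"
proof -
  interpret S: prob_space "stream_space (measure_pmf D)" by (rule prob_space.prob_space_stream_space[OF prob_space_measure_pmf])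
  show ?thesis using S.emeasure_space_1 by simp
qed

lemma stake_meas:
  fixes D :: "'b::countable pmf" and h :: "'b list \<Rightarrow> 'c"
  shows "(\<lambda>\<omega>. h (stake k \<omega>)) \<in> measurable (stream_space (measure_pmf D)) (count_space UNIV)"
proof -
  have "(\<lambda>\<omega>. h (stake k \<omega>)) \<in> measurable (stream_space (count_space UNIV)) (count_space UNIV)"
    by (rule measurable_compose[OF measurable_stake]) simp
  then show ?thesis using measurable_cong_sets[OF sets_S refl] by blast
qed

lemma stake_borel:
  fixes D :: "'b::countable pmf" and h :: "'b list \<Rightarrow> ennreal"
  shows "(\<lambda>\<omega>. h (stake k \<omega>)) \<in> borel_measurable (stream_space (measure_pmf D))"
  by (rule measurable_compose[OF stake_meas]) simp

lemma stake_pred: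
  fixes D :: "'b::countable pmf"
  shows "Measurable.pred (stream_space (measure_pmf D)) (\<lambda>\<omega>. P (stake k \<omega>))"
  by (rule measurable_compose[OF stake_meas]) simp

lemma L1:
  fixes D :: "'b::countable pmf" and g :: "'b list \<Rightarrow> ennreal"
  shows "(\<integral>\<^sup>+\<omega>. g (stake (Suc k) \<omega>) \<partial>stream_space (measure_pmf D))
       = (\<integral>\<^sup>+\<omega>. (\<integral>\<^sup>+x. g (stake k \<omega> @ [x]) \<partial>measure_pmf D) \<partial>stream_space (measure_pmf D))"
proof (induction k arbitrary: g)
  case 0
  interpret S: prob_space "stream_space (measure_pmf D)" by (rule prob_space.prob_space_stream_space[OF prob_space_measure_pmf])
  show ?case
    apply (subst prob_space.nn_integral_stream_space[OF prob_space_measure_pmf])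
     apply (rule stake_borel[where h=g and k="Suc 0"])
    apply (simp add: S.emeasure_space_1)
    done
next
  case (Suc k)
  have "(\<integral>\<^sup>+\<omega>. g (stake (Suc (Suc k)) \<omega>) \<partial>stream_space (measure_pmf D))
     = (\<integral>\<^sup>+y. (\<integral>\<^sup>+\<omega>. g (y # stake (Suc k) \<omega>) \<partial>stream_space (measure_pmf D)) \<partial>measure_pmf D)"
    by (subst prob_space.nn_integral_stream_space[OF prob_space_measure_pmf]) (rule stake_borel, simp)
  also have "\<dots> = (\<integral>\<^sup>+y. (\<integral>\<^sup>+\<omega>. (\<integral>\<^sup>+x. g (y # stake k \<omega> @ [x]) \<partial>measure_pmf D) \<partial>stream_space (measure_pmf D)) \<partial>measure_pmf D)"
    using Suc[of "\<lambda>xs. g (y # xs)" for y] by simp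
  also have "\<dots> = (\<integral>\<^sup>+\<omega>. (\<integral>\<^sup>+x. g (stake (Suc k) \<omega> @ [x]) \<partial>measure_pmf D) \<partial>stream_space (measure_pmf D))"
    by (subst (2) prob_space.nn_integral_stream_space[OF prob_space_measure_pmf])
      (rule stake_borel[where h="\<lambda>xs. \<integral>\<^sup>+x. g (xs @ [x]) \<partial>measure_pmf D"], simp)
  finally show ?case .
qed

lemma pred_set:
  fixes D :: "'b::countable pmf"
  shows "{\<omega>. P (stake k \<omega>)} \<in> sets (stream_space (measure_pmf D))"
proof -
  have "{\<omega>\<in>space (stream_space (measure_pmf D)). P (stake k \<omega>)} \<in> sets (stream_space (measure_pmf D))"
    by (rule stake_pred[unfolded pred_def])
  then show ?thesis by simp
qed

lemma ville_fin:
  fixes D :: "'b::countable pmf" and f :: "nat \<Rightarrow> 'b list \<Rightarrow> ennreal" and \<epsilon> :: ennreal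
  assumes sup: "\<And>k xs. length xs = k \<Longrightarrow> (\<integral>\<^sup>+x. f (Suc k) (xs@[x]) \<partial>measure_pmf D) \<le> f k xs"
  shows "\<epsilon> * emeasure (stream_space (measure_pmf D)) {\<omega>. \<exists>j. n \<le> j \<and> j \<le> n+m \<and> \<epsilon> \<le> f j (stake j \<omega>)}
     \<le> (\<integral>\<^sup>+\<omega>. f n (stake n \<omega>) \<partial>stream_space (measure_pmf D))"
proof -
  let ?S = "stream_space (measure_pmf D)"
  define a where "a m xs = (\<exists>j. n \<le> j \<and> j \<le> n+m \<and> \<epsilon> \<le> f j (take j xs))" for m xs
  define Y where "Y m \<omega> = (if a m (stake (n+m) \<omega>) then \<epsilon> else f (n+m) (stake (n+m) \<omega>))" for m \<omega>
  have aeq: "a m (stake (n+m) \<omega>) \<longleftrightarrow> (\<exists>j. n \<le> j \<and> j \<le> n+m \<and> \<epsilon> \<le> f j (stake j \<omega>))" for m \<omega>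
    unfolding a_def by (auto simp: take_stake min_absorb1)
  have Yle: "(\<integral>\<^sup>+\<omega>. Y m \<omega> \<partial>?S) \<le> (\<integral>\<^sup>+\<omega>. f n (stake n \<omega>) \<partial>?S)" for m
  proof (induction m)
    case 0
    show ?case by (rule nn_integral_mono) (auto simp: Y_def a_def take_stake)
  next
    case (Suc m)
    define G where "G ys = (if a m (take (n+m) ys) then \<epsilon> else f (Suc (n+m)) ys)" for ys
    have "(\<integral>\<^sup>+\<omega>. Y (Suc m) \<omega> \<partial>?S) \<le> (\<integral>\<^sup>+\<omega>. G (stake (Suc (n+m)) \<omega>) \<partial>?S)"
    proof (rule nn_integral_mono)
      fix \<omega> :: "'b stream"
      have t: "take (n+m) (stake (Suc (n+m)) \<omega>) = stake (n+m) \<omega>" by (subst take_stake) simp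
      have "a (Suc m) (stake (n+Suc m) \<omega>) \<longleftrightarrow> a m (stake (n+m) \<omega>) \<or> \<epsilon> \<le> f (Suc (n+m)) (stake (Suc (n+m)) \<omega>)"
        unfolding aeq by (auto simp: le_Suc_eq simp del: stake.simps, intro exI[of _ "Suc (n+m)"], simp)
      then show "Y (Suc m) \<omega> \<le> G (stake (Suc (n+m)) \<omega>)"
        unfolding Y_def G_def t by auto
    qed
    also have "\<dots> = (\<integral>\<^sup>+\<omega>. (\<integral>\<^sup>+x. G (stake (n+m) \<omega> @ [x]) \<partial>measure_pmf D) \<partial>?S)"
      by (rule L1)
    also have "\<dots> = (\<integral>\<^sup>+\<omega>. (if a m (stake (n+m) \<omega>) then \<epsilon> else (\<integral>\<^sup>+x. f (Suc (n+m)) (stake (n+m) \<omega> @ [x]) \<partial>measure_pmf D)) \<partial>?S)"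
      by (rule nn_integral_cong) (simp add: G_def measure_pmf.emeasure_space_1)
    also have "\<dots> \<le> (\<integral>\<^sup>+\<omega>. Y m \<omega> \<partial>?S)"
      by (rule nn_integral_mono) (auto simp: Y_def intro!: sup)
    finally show ?case using Suc.IH by (rule order_trans)
  qed
  let ?A = "{\<omega>. \<exists>j. n \<le> j \<and> j \<le> n+m \<and> \<epsilon> \<le> f j (stake j \<omega>)}"
  have Aeq: "?A = {\<omega>. a m (stake (n+m) \<omega>)}" using aeq by auto
  have Am: "?A \<in> sets ?S" unfolding Aeq by (rule pred_set)
  have "\<epsilon> * emeasure ?S ?A = (\<integral>\<^sup>+\<omega>. \<epsilon> * indicator ?A \<omega> \<partial>?S)"
    by (rule nn_integral_cmult_indicator[OF Am, symmetric])
  also have "\<dots> \<le> (\<integral>\<^sup>+\<omega>. Y m \<omega> \<partial>?S)"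
    by (rule nn_integral_mono) (auto simp: Y_def aeq split: split_indicator)
  finally show ?thesis using Yle[of m] by (rule order_trans)
qed

lemma ville:
  fixes D :: "'b::countable pmf" and f :: "nat \<Rightarrow> 'b list \<Rightarrow> ennreal" and \<epsilon> :: ennreal
  assumes sup: "\<And>k xs. length xs = k \<Longrightarrow> (\<integral>\<^sup>+x. f (Suc k) (xs@[x]) \<partial>measure_pmf D) \<le> f k xs"
  shows "\<epsilon> * emeasure (stream_space (measure_pmf D)) {\<omega>. \<exists>j\<ge>n. \<epsilon> \<le> f j (stake j \<omega>)}
     \<le> (\<integral>\<^sup>+\<omega>. f n (stake n \<omega>) \<partial>stream_space (measure_pmf D))"
proof -
  let ?S = "stream_space (measure_pmf D)"
  define A where "A m = {\<omega>. \<exists>j. n \<le> j \<and> j \<le> n+m \<and> \<epsilon> \<le> f j (stake j \<omega>)}" for m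
  have Aeq: "A m = {\<omega>. (\<exists>j. n \<le> j \<and> j \<le> n+m \<and> \<epsilon> \<le> f j (take j (stake (n+m) \<omega>)))}" for m
    unfolding A_def by (auto simp: take_stake min_absorb1)
  have rA: "range A \<subseteq> sets ?S" unfolding Aeq by (auto intro: pred_set)
  have iA: "incseq A" unfolding incseq_def A_def by fastforce
  have U: "(\<Union>i. A i) = {\<omega>. \<exists>j\<ge>n. \<epsilon> \<le> f j (stake j \<omega>)}"
    unfolding A_def
  proof (auto)
    fix x j assume "n \<le> j" "\<epsilon> \<le> f j (stake j x)"
    then show "\<exists>xa j. n \<le> j \<and> j \<le> n + xa \<and> \<epsilon> \<le> f j (stake j x)"
      by (intro exI[of _ "j - n"] exI[of _ j]) simp
  qed
  have "\<epsilon> * emeasure ?S (\<Union>i. A i) = \<epsilon> * (SUP m. emeasure ?S (A m))"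
    using SUP_emeasure_incseq[OF rA iA] by simp
  also have "\<dots> = (SUP m. \<epsilon> * emeasure ?S (A m))" by (rule SUP_mult_left_ennreal)
  also have "\<dots> \<le> (\<integral>\<^sup>+\<omega>. f n (stake n \<omega>) \<partial>?S)"
    by (rule SUP_least) (unfold A_def, rule ville_fin[where D=D and f=f and \<epsilon>=\<epsilon>, OF sup])
  finally show ?thesis unfolding U .
qed

lemma ennreal_small:
  assumes "(0::ennreal) < a" shows "\<exists>k. ennreal (1 / real (Suc k)) < a"
proof (cases a)
  case (real r)
  then have "r > 0" using assms by auto
  then obtain k where "inverse (real (Suc k)) < r" using reals_Archimedean by blast
  then show ?thesis using real \<open>r > 0\<close> by (intro exI[of _ k]) (simp add: divide_inverse ennreal_lessI)
qed simp

lemma ae_conv: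
  fixes D :: "'b::countable pmf" and f :: "nat \<Rightarrow> 'b list \<Rightarrow> ennreal"
  assumes sup: "\<And>k xs. length xs = k \<Longrightarrow> (\<integral>\<^sup>+x. f (Suc k) (xs@[x]) \<partial>measure_pmf D) \<le> f k xs"
    and lim: "(\<lambda>n. \<integral>\<^sup>+\<omega>. f n (stake n \<omega>) \<partial>stream_space (measure_pmf D)) \<longlonglongrightarrow> 0"
  shows "AE \<omega> in stream_space (measure_pmf D). (\<lambda>j. f j (stake j \<omega>)) \<longlonglongrightarrow> 0"
proof -
  let ?S = "stream_space (measure_pmf D)"
  define e where "e k = ennreal (1 / real (Suc k))" for k
  define N where "N k = {\<omega>. \<forall>n. \<exists>j\<ge>n. e k \<le> f j (stake j \<omega>)}" for k
  have Ns: "N k \<in> sets ?S" for k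
  proof -
    have [measurable]: "\<And>j. Measurable.pred ?S (\<lambda>\<omega>. e k \<le> f j (stake j \<omega>))" by (rule stake_pred)
    have "Measurable.pred ?S (\<lambda>\<omega>. \<forall>n::nat. \<exists>j\<ge>n. e k \<le> f j (stake j \<omega>))" by measurable
    then show ?thesis unfolding N_def pred_def by simp
  qed
  have N0: "emeasure ?S (N k) = 0" for k
  proof -
    have "e k * emeasure ?S (N k) \<le> (\<integral>\<^sup>+\<omega>. f n (stake n \<omega>) \<partial>?S)" for n
    proof -
      have "emeasure ?S (N k) \<le> emeasure ?S {\<omega>. \<exists>j\<ge>n. e k \<le> f j (stake j \<omega>)}"
      proof (rule emeasure_mono)
        have [measurable]: "\<And>j. Measurable.pred ?S (\<lambda>\<omega>. e k \<le> f j (stake j \<omega>))" by (rule stake_pred)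
        have "Measurable.pred ?S (\<lambda>\<omega>. \<exists>j\<ge>n. e k \<le> f j (stake j \<omega>))" by measurable
        then show "{\<omega>. \<exists>j\<ge>n. e k \<le> f j (stake j \<omega>)} \<in> sets ?S" unfolding pred_def by simp
      qed (auto simp: N_def)
      then have "e k * emeasure ?S (N k) \<le> e k * emeasure ?S {\<omega>. \<exists>j\<ge>n. e k \<le> f j (stake j \<omega>)}"
        by (rule mult_left_mono) simp
      also have "\<dots> \<le> (\<integral>\<^sup>+\<omega>. f n (stake n \<omega>) \<partial>?S)" by (rule ville[where D=D and f=f, OF sup])
      finally show ?thesis .
    qed
    then have "e k * emeasure ?S (N k) \<le> 0"
      by (intro LIMSEQ_le_const[OF lim]) auto
    moreover have "e k \<noteq> 0" by (simp add: e_def)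
    ultimately show ?thesis by simp
  qed
  have null: "(\<Union>k. N k) \<in> null_sets ?S"
    using Ns N0 by (intro null_sets_UN) auto
  show ?thesis
  proof (rule AE_I'[OF null], safe)
    fix \<omega> assume nc: "\<not> (\<lambda>j. f j (stake j \<omega>)) \<longlonglongrightarrow> 0"
    show "\<omega> \<in> (\<Union>k. N k)"
    proof (rule ccontr)
      assume "\<omega> \<notin> (\<Union>k. N k)"
      then have ev: "\<forall>k. \<exists>n. \<forall>j\<ge>n. f j (stake j \<omega>) < e k"
        by (auto simp: N_def not_le) (meson not_le)
      have "(\<lambda>j. f j (stake j \<omega>)) \<longlonglongrightarrow> 0"
      proof (rule order_tendstoI)
        fix a :: ennreal assume "a < 0" then show "\<forall>\<^sub>F x in sequentially. a < f x (stake x \<omega>)" by simp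
      next
        fix a :: ennreal assume "0 < a"
        then obtain k where k: "e k < a" using ennreal_small unfolding e_def by blast
        obtain n where "\<forall>j\<ge>n. f j (stake j \<omega>) < e k" using ev by blast
        then show "\<forall>\<^sub>F x in sequentially. f x (stake x \<omega>) < a"
          unfolding eventually_sequentially using k by (meson order.strict_trans)
      qed
      with nc show False by simp
    qed
  qed
qed




lemma det_conv:
  fixes e lr :: "nat \<Rightarrow> real" and \<delta> C :: real
  assumes e0: "\<And>n. 0 \<le> e n" and lr: "\<And>i. 0 \<le> lr i" "\<And>i. lr i \<le> 1" and ns: "\<not> summable lr"
    and s2: "summable (\<lambda>i. (lr i)^2)" and d: "0 < \<delta>" "\<delta> \<le> 1" and C: "0 \<le> C"
    and recA: "\<And>n. e (Suc n) \<le> (1 - \<delta> * lr n) * e n + C * (lr n)^2 * (e n + 1)"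
  shows "e \<longlonglongrightarrow> 0"
proof -
  define B where "B = (e 0 + 1) * exp (C * (\<Sum>k. (lr k)^2))"
  have b1: "e n + 1 \<le> (e 0 + 1) * exp (C * (\<Sum>k<n. (lr k)^2))" for n
  proof (induction n)
    case (Suc n)
    have "e (Suc n) + 1 \<le> (1 + C * (lr n)^2) * (e n + 1)"
    proof -
      have "0 \<le> \<delta> * lr n * e n" using e0[of n] lr[of n] d by simp
      moreover have "(1 - \<delta> * lr n) * e n + C * (lr n)^2 * (e n + 1) = e n - \<delta> * lr n * e n + C * (lr n)^2 * (e n + 1)"
        by (simp add: algebra_simps)
      moreover have "(1 + C * (lr n)^2) * (e n + 1) = e n + 1 + C * (lr n)^2 * (e n + 1)"
        by (simp add: algebra_simps)
      ultimately show ?thesis using recA[of n] by argo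
    qed
    also have "\<dots> \<le> exp (C * (lr n)^2) * (e n + 1)"
      using e0[of n] by (intro mult_right_mono) (simp_all add: add.commute exp_ge_add_one_self)
    also have "\<dots> \<le> exp (C * (lr n)^2) * ((e 0 + 1) * exp (C * (\<Sum>k<n. (lr k)^2)))"
      using Suc by (intro mult_left_mono) simp_all
    also have "\<dots> = (e 0 + 1) * exp (C * (\<Sum>k<Suc n. (lr k)^2))"
      by (simp add: distrib_left exp_add)
    finally show ?case .
  qed simp
  have bB: "e n + 1 \<le> B" for n
  proof -
    have "(\<Sum>k<n. (lr k)^2) \<le> (\<Sum>k. (lr k)^2)" by (rule sum_le_suminf[OF s2]) auto
    then have "exp (C * (\<Sum>k<n. (lr k)^2)) \<le> exp (C * (\<Sum>k. (lr k)^2))"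
      using C by (simp add: mult_left_mono)
    then have "(e 0 + 1) * exp (C * (\<Sum>k<n. (lr k)^2)) \<le> (e 0 + 1) * exp (C * (\<Sum>k. (lr k)^2))"
      using e0[of 0] by (intro mult_left_mono) simp_all
    then show ?thesis using b1[of n] unfolding B_def by linarith
  qed
  define \<beta> where "\<beta> n = C * B * (lr n)^2" for n
  have \<beta>0: "0 \<le> \<beta> n" for n using C bB[of 0] e0[of 0] unfolding \<beta>_def by simp
  have s\<beta>: "summable \<beta>" unfolding \<beta>_def using s2 by (intro summable_mult) simp
  have rec2: "e (Suc n) \<le> (1 - \<delta> * lr n) * e n + \<beta> n" for n
  proof -
    have "C * (lr n)^2 * (e n + 1) \<le> C * (lr n)^2 * B" using bB[of n] C by (intro mult_left_mono) simp_all
    then show ?thesis using recA[of n] unfolding \<beta>_def by (simp add: mult.commute mult.left_commute)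
  qed
  have main: "e (N + m) \<le> exp (- \<delta> * (\<Sum>k<m. lr (N + k))) * e N + (\<Sum>k<m. \<beta> (N + k))" for N m
  proof (induction m)
    case (Suc m)
    let ?s = "\<Sum>k<m. lr (N + k)"
    have a: "0 \<le> 1 - \<delta> * lr (N+m)" using mult_le_one[of \<delta> "lr (N+m)"] d lr[of "N+m"] by linarith
    have b: "1 - \<delta> * lr (N+m) \<le> exp (- \<delta> * lr (N+m))"
      using exp_ge_add_one_self[of "- \<delta> * lr (N+m)"] by simp
    have "e (N + Suc m) \<le> (1 - \<delta> * lr (N+m)) * e (N+m) + \<beta> (N+m)" using rec2[of "N+m"] by simp
    also have "\<dots> \<le> (1 - \<delta> * lr (N+m)) * (exp (- \<delta> * ?s) * e N + (\<Sum>k<m. \<beta> (N + k))) + \<beta> (N+m)"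
      using Suc a by (intro add_right_mono mult_left_mono) simp_all
    also have "\<dots> \<le> exp (- \<delta> * lr (N+m)) * (exp (- \<delta> * ?s) * e N) + (\<Sum>k<m. \<beta> (N + k)) + \<beta> (N+m)"
    proof -
      have "(1 - \<delta> * lr (N+m)) * (exp (- \<delta> * ?s) * e N) \<le> exp (- \<delta> * lr (N+m)) * (exp (- \<delta> * ?s) * e N)"
        using mult_right_mono[OF b, of "exp (- \<delta> * ?s) * e N"] e0[of N] by simp
      moreover have "(1 - \<delta> * lr (N+m)) * (\<Sum>k<m. \<beta> (N + k)) \<le> (\<Sum>k<m. \<beta> (N + k))"
        using a d lr[of "N+m"] \<beta>0 by (intro mult_left_le_one_le) (simp_all add: sum_nonneg)
      ultimately show ?thesis by (simp only: distrib_left)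
    qed
    also have "\<dots> = exp (- \<delta> * (\<Sum>k<Suc m. lr (N + k))) * e N + (\<Sum>k<Suc m. \<beta> (N + k))"
      by (simp add: distrib_left exp_add[symmetric] algebra_simps)
    finally show ?case .
  qed simp
  show ?thesis
  proof (rule LIMSEQ_I)
    fix r :: real assume r: "0 < r"
    obtain N where N: "\<forall>n\<ge>N. norm (\<Sum>i. \<beta> (i + n)) < r/2"
      using suminf_exist_split[OF _ s\<beta>, of "r/2"] r by auto
    have tail: "(\<Sum>k<m. \<beta> (N + k)) < r/2" for m
    proof -
      have "(\<Sum>k<m. \<beta> (N + k)) \<le> (\<Sum>i. \<beta> (i + N))"
        using sum_le_suminf[OF summable_ignore_initial_segment[OF s\<beta>, of N], of "{..<m}"] \<beta>0
        by (simp add: add.commute)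
      moreover have "(\<Sum>i. \<beta> (i + N)) \<le> norm (\<Sum>i. \<beta> (i + N))" by simp
      ultimately show ?thesis using N by fastforce
    qed
    define K where "K = 2 * e N / (r * \<delta>)"
    have "\<exists>m0. K < (\<Sum>k<m0. lr (N + k))"
    proof (rule ccontr)
      assume nA: "\<not> ?thesis"
      have "(\<Sum>k\<le>m. lr (k + N)) \<le> K" for m
      proof -
        have "\<not> K < (\<Sum>k<Suc m. lr (N + k))" using nA by blast
        then show ?thesis by (simp add: lessThan_Suc_atMost add.commute)
      qed
      then have "summable (\<lambda>k. lr (k + N))" by (intro bounded_imp_summable[of _ K]) (simp_all add: lr)
      then have "summable lr" by (simp add: summable_iff_shift)
      with ns show False by simp
    qed
    then obtain m0 where m0: "K < (\<Sum>k<m0. lr (N + k))" by blast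
    show "\<exists>no. \<forall>n\<ge>no. norm (e n - 0) < r"
    proof (intro exI allI impI)
      fix n assume n: "N + m0 \<le> n"
      define m where "m = n - N"
      have nm: "n = N + m" using n unfolding m_def by simp
      have "(\<Sum>k<m0. lr (N + k)) \<le> (\<Sum>k<m. lr (N + k))"
        using n lr by (intro sum_mono2) (simp_all add: m_def)
      then have Km: "K < (\<Sum>k<m. lr (N + k))" using m0 by simp
      have ex: "exp (- \<delta> * (\<Sum>k<m. lr (N + k))) * e N < r/2"
      proof -
        let ?s = "\<Sum>k<m. lr (N + k)"
        have "0 \<le> K" unfolding K_def using e0[of N] r d by simp
        have "1 + \<delta> * ?s \<le> exp (\<delta> * ?s)" by (rule exp_ge_add_one_self)
        have "e N < r/2 * (1 + \<delta> * ?s)"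
        proof -
          have "\<delta> * K < \<delta> * ?s" using Km d by simp
          moreover have "\<delta> * K = 2 * e N / r" unfolding K_def using d r by simp
          ultimately have "2 * e N / r < \<delta> * ?s" by simp
          then have "2 * e N < r * (\<delta> * ?s)" using r by (simp add: divide_less_eq mult.commute)
          then show ?thesis using r by (simp add: algebra_simps)
        qed
        also have "\<dots> \<le> r/2 * exp (\<delta> * ?s)"
          using \<open>1 + \<delta> * ?s \<le> exp (\<delta> * ?s)\<close> r by simp
        finally have "e N < r/2 * exp (\<delta> * ?s)" .
        then show ?thesis by (simp add: exp_minus field_simps)
      qed
      show "norm (e n - 0) < r" using main[of N m] ex tail[of m] e0[of n] nm by simp
    qed
  qed
qed




locale qsetup =
  fixes p :: "'a::finite \<Rightarrow> 'a list pmf" and c :: "'a \<Rightarrow> real" and sel :: "'a pmf"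
  assumes bmc: "bmc p c" and fin: "\<And>q. cstar p c q < \<infinity>" and selpos: "\<And>q. 0 < pmf sel q"
begin

lemma finp: "finite (set_pmf (p q))" and cpos: "0 < c q" using bmc unfolding bmc_def by auto

definition cs where "cs q = enn2real (cstar p c q)"

lemma mono_F: "mono (bmc_F p c)"
  unfolding mono_def le_fun_def bmc_F_def
  by (auto intro!: add_left_mono sum_mono mult_left_mono)

lemma cstar_fp: "cstar p c = bmc_F p c (cstar p c)"
  unfolding cstar_def by (rule lfp_unfold[OF mono_F])

lemma cs_nonneg: "0 \<le> cs q" by (simp add: cs_def)

lemma cstar_eq: "cstar p c q = ennreal (cs q)"
  unfolding cs_def using fin[of q] by simp

lemma cs_fp: "cs q = c q + (\<Sum>\<alpha>\<in>set_pmf (p q). pmf (p q) \<alpha> * (\<Sum>i<length \<alpha>. cs (\<alpha> ! i)))"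
proof -
  have nn: "0 \<le> (\<Sum>\<alpha>\<in>set_pmf (p q). pmf (p q) \<alpha> * (\<Sum>i<length \<alpha>. cs (\<alpha> ! i)))"
    by (intro sum_nonneg mult_nonneg_nonneg) (simp_all add: cs_nonneg sum_nonneg)
  have "ennreal (cs q) = bmc_F p c (cstar p c) q" using cstar_fp cstar_eq by metis
  also have "\<dots> = ennreal (c q) + (\<Sum>\<alpha>\<in>set_pmf (p q). ennreal (pmf (p q) \<alpha>) * (\<Sum>i<length \<alpha>. ennreal (cs (\<alpha> ! i))))"
    unfolding bmc_F_def cstar_eq by simp
  also have "\<dots> = ennreal (c q) + ennreal (\<Sum>\<alpha>\<in>set_pmf (p q). pmf (p q) \<alpha> * (\<Sum>i<length \<alpha>. cs (\<alpha> ! i)))"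
  proof -
    have inner: "ennreal (pmf (p q) \<alpha>) * (\<Sum>i<length \<alpha>. ennreal (cs (\<alpha>!i))) = ennreal (pmf (p q) \<alpha> * (\<Sum>i<length \<alpha>. cs (\<alpha>!i)))" for \<alpha>
      by (simp add: ennreal_mult sum_nonneg cs_nonneg)
    show ?thesis unfolding inner by (subst sum_ennreal) (auto intro!: mult_nonneg_nonneg sum_nonneg cs_nonneg)
  qed
  also have "\<dots> = ennreal (c q + (\<Sum>\<alpha>\<in>set_pmf (p q). pmf (p q) \<alpha> * (\<Sum>i<length \<alpha>. cs (\<alpha> ! i))))"
    using cpos[of q] nn by simp
  finally show ?thesis using cpos[of q] nn cs_nonneg[of q] by (subst (asm) ennreal_inj) auto
qed

definition cnt :: "'a list \<Rightarrow> 'a \<Rightarrow> real" where "cnt \<alpha> r = real (card {i. i < length \<alpha> \<and> \<alpha> ! i = r})"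

lemma sum_cnt: "(\<Sum>i<length \<alpha>. f (\<alpha> ! i)) = (\<Sum>r\<in>UNIV. cnt \<alpha> r * f r)"
proof -
  have "(\<Sum>i<length \<alpha>. f (\<alpha> ! i)) = (\<Sum>r\<in>UNIV. \<Sum>i\<in>{i. i \<in> {..<length \<alpha>} \<and> \<alpha> ! i = r}. f (\<alpha> ! i))"
    by (rule sum.group[symmetric]) auto
  also have "\<dots> = (\<Sum>r\<in>UNIV. cnt \<alpha> r * f r)"
    unfolding cnt_def by (intro sum.cong refl) simp
  finally show ?thesis .
qed

definition M where "M q r = (\<Sum>\<alpha>\<in>set_pmf (p q). pmf (p q) \<alpha> * cnt \<alpha> r)"

lemma M_nonneg: "0 \<le> M q r" unfolding M_def cnt_def by (intro sum_nonneg) simp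

lemma M_sum: "(\<Sum>\<alpha>\<in>set_pmf (p q). pmf (p q) \<alpha> * (\<Sum>i<length \<alpha>. f (\<alpha> ! i))) = (\<Sum>r\<in>UNIV. M q r * f r)"
  unfolding sum_cnt M_def sum_distrib_left sum_distrib_right mult.assoc
  by (rule sum.swap)

lemma cs_M: "cs q = c q + (\<Sum>r\<in>UNIV. M q r * cs r)"
  using cs_fp[of q] unfolding M_sum .

lemma Mcs_nonneg: "0 \<le> (\<Sum>r\<in>UNIV. M q r * cs r)"
  by (intro sum_nonneg mult_nonneg_nonneg M_nonneg cs_nonneg)

lemma cs_pos: "0 < cs q" using cs_M[of q] cpos[of q] Mcs_nonneg[of q] by linarith

definition \<rho> where "\<rho> = Max (range (\<lambda>q. 1 - c q / cs q))"

lemma rho: "\<rho> < 1" "0 \<le> \<rho>" "(\<Sum>r\<in>UNIV. M q r * cs r) \<le> \<rho> * cs q"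
proof -
  have "\<rho> \<in> range (\<lambda>q. 1 - c q / cs q)" unfolding \<rho>_def by (rule Max_in) auto
  then obtain q0 where "\<rho> = 1 - c q0 / cs q0" by auto
  then show "\<rho> < 1" using cpos[of q0] cs_pos[of q0] by simp
  have le: "1 - c q / cs q \<le> \<rho>" for q unfolding \<rho>_def by (rule Max_ge) auto
  have "c q \<le> cs q" using cs_M[of q] Mcs_nonneg[of q] by linarith
  then show "0 \<le> \<rho>" using le[of q] cs_pos[of q] by (smt (verit) divide_le_eq_1)
  have "(\<Sum>r\<in>UNIV. M q r * cs r) = (1 - c q / cs q) * cs q"
    using cs_M[of q] cs_pos[of q] by (simp add: field_simps)
  also have "\<dots> \<le> \<rho> * cs q" using le[of q] cs_pos[of q] by (intro mult_right_mono) simp_all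
  finally show "(\<Sum>r\<in>UNIV. M q r * cs r) \<le> \<rho> * cs q" .
qed

fun rv :: "nat \<Rightarrow> 'a \<Rightarrow> real" where
  "rv 0 = (\<lambda>r. 1)"
| "rv (Suc k) = (\<lambda>r. \<Sum>q\<in>UNIV. rv k q * M q r)"

lemma rv_nonneg: "0 \<le> rv k r"
  by (induction k arbitrary: r) (auto intro!: sum_nonneg mult_nonneg_nonneg M_nonneg)

lemma rv_bound: "(\<Sum>r\<in>UNIV. rv k r * cs r) \<le> \<rho>^k * (\<Sum>r\<in>UNIV. cs r)"
proof (induction k)
  case (Suc k)
  have "(\<Sum>r\<in>UNIV. rv (Suc k) r * cs r) = (\<Sum>q\<in>UNIV. rv k q * (\<Sum>r\<in>UNIV. M q r * cs r))"
    by (simp add: sum_distrib_left sum_distrib_right mult.assoc) (rule sum.swap)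
  also have "\<dots> \<le> (\<Sum>q\<in>UNIV. rv k q * (\<rho> * cs q))"
    by (intro sum_mono mult_left_mono rho rv_nonneg)
  also have "\<dots> = \<rho> * (\<Sum>q\<in>UNIV. rv k q * cs q)" by (simp add: sum_distrib_left algebra_simps)
  also have "\<dots> \<le> \<rho> * (\<rho>^k * (\<Sum>r\<in>UNIV. cs r))" using Suc rho(2) by (rule mult_left_mono)
  finally show ?case by simp
qed simp

lemma exN: "\<exists>N. \<forall>r. rv (Suc N) r \<le> 1"
proof -
  define m where "m = Min (range cs)"
  have m: "0 < m" unfolding m_def using cs_pos by (subst Min_gr_iff) auto
  have mle: "m \<le> cs r" for r unfolding m_def by (rule Min_le) auto
  define X where "X = (\<Sum>r\<in>UNIV. cs r)"
  have X: "0 < X" unfolding X_def using cs_pos by (intro sum_pos) auto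
  have "(\<lambda>n. \<rho>^n) \<longlonglongrightarrow> 0" using rho by (intro LIMSEQ_power_zero) simp
  moreover have "0 < m / X" using m X by simp
  ultimately have "\<forall>\<^sub>F n in sequentially. \<rho>^n < m / X" by (rule order_tendstoD)
  then obtain N where N: "\<And>n. n \<ge> N \<Longrightarrow> \<rho>^n < m / X" unfolding eventually_sequentially by blast
  have "rv (Suc N) r \<le> 1" for r
  proof -
    have "rv (Suc N) r * cs r \<le> (\<Sum>r\<in>UNIV. rv (Suc N) r * cs r)"
      by (rule member_le_sum) (auto intro!: mult_nonneg_nonneg rv_nonneg[of "Suc N"] cs_nonneg simp del: rv.simps)
    also have "\<dots> \<le> \<rho>^(Suc N) * X" using rv_bound unfolding X_def .
    also have "\<dots> \<le> m" using N[of "Suc N"] X by (simp add: field_simps)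
    also have "\<dots> \<le> cs r" by (rule mle)
    finally show ?thesis using cs_pos[of r] by simp
  qed
  then show ?thesis by blast
qed

definition N0 where "N0 = (SOME N. \<forall>r. rv (Suc N) r \<le> 1)"
definition y where "y r = (\<Sum>k<Suc N0. rv k r)"

lemma rvN0: "rv (Suc N0) r \<le> 1" using someI_ex[OF exN] unfolding N0_def by blast

lemma y_ge1: "1 \<le> y r"
proof -
  have "y r = rv 0 r + (\<Sum>k<N0. rv (Suc k) r)" unfolding y_def by (rule sum.lessThan_Suc_shift)
  moreover have "0 \<le> (\<Sum>k<N0. rv (Suc k) r)" by (intro sum_nonneg rv_nonneg)
  ultimately show ?thesis by simp
qed

lemma yM: "(\<Sum>q\<in>UNIV. y q * M q r) \<le> y r"
proof -
  have "(\<Sum>q\<in>UNIV. y q * M q r) = (\<Sum>q\<in>UNIV. \<Sum>k<Suc N0. rv k q * M q r)"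
    unfolding y_def sum_distrib_right ..
  also have "\<dots> = (\<Sum>k<Suc N0. \<Sum>q\<in>UNIV. rv k q * M q r)" by (rule sum.swap)
  also have "\<dots> = (\<Sum>k<Suc N0. rv (Suc k) r)" by simp
  also have "\<dots> = (\<Sum>k<N0. rv (Suc k) r) + rv (Suc N0) r" by simp
  also have "\<dots> \<le> (\<Sum>k<N0. rv (Suc k) r) + rv 0 r" using rvN0[of r] by simp
  also have "\<dots> = y r" unfolding y_def by (subst sum.lessThan_Suc_shift) simp
  finally show ?thesis .
qed

definition d where "d q = y q / cs q"
definition w where "w q = y q * c q / (2 * (cs q)^2)"

lemma d_pos: "0 < d q" unfolding d_def using y_ge1[of q] cs_pos[of q] by simp
lemma w_pos: "0 < w q" unfolding w_def using y_ge1[of q] cs_pos[of q] cpos[of q] by simp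

lemma quad:
  "(\<Sum>q\<in>UNIV. d q * E q * (\<Sum>r\<in>UNIV. M q r * E r)) - (\<Sum>q\<in>UNIV. d q * (E q)^2)
     \<le> - (\<Sum>q\<in>UNIV. w q * (E q)^2)"
proof -
  define z where "z q = E q / cs q" for q
  have Ez: "E q = cs q * z q" for q unfolding z_def using cs_pos[of q] by simp
  have "(\<Sum>q\<in>UNIV. d q * E q * (\<Sum>r\<in>UNIV. M q r * E r))
      = (\<Sum>q\<in>UNIV. \<Sum>r\<in>UNIV. (y q * M q r * cs r) * (z q * z r))"
  proof -
    have "d q * E q * (M q r * E r) = (y q * M q r * cs r) * (z q * z r)" for q r
      unfolding d_def Ez[of q] Ez[of r] using cs_pos[of q] by (simp add: field_simps)
    then show ?thesis unfolding sum_distrib_left by (simp only:)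
  qed
  also have "\<dots> \<le> (\<Sum>q\<in>UNIV. \<Sum>r\<in>UNIV. (y q * M q r * cs r) * ((z q)^2 / 2 + (z r)^2 / 2))"
  proof (intro sum_mono mult_left_mono)
    fix q r
    have "0 \<le> (z q - z r)^2" by simp
    then show "z q * z r \<le> (z q)^2 / 2 + (z r)^2 / 2" by (simp add: power2_diff)
    show "0 \<le> y q * M q r * cs r" using y_ge1[of q] M_nonneg[of q r] cs_nonneg[of r] by simp
  qed
  also have "\<dots> = (\<Sum>q\<in>UNIV. y q * (z q)^2 / 2 * (\<Sum>r\<in>UNIV. M q r * cs r))
                  + (\<Sum>r\<in>UNIV. cs r * (z r)^2 / 2 * (\<Sum>q\<in>UNIV. y q * M q r))"
  proof -
    have e1: "(\<Sum>q\<in>UNIV. \<Sum>r\<in>UNIV. (y q * M q r * cs r) * ((z q)^2 / 2 + (z r)^2 / 2))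
       = (\<Sum>q\<in>UNIV. \<Sum>r\<in>UNIV. (y q * M q r * cs r) * ((z q)^2 / 2))
       + (\<Sum>q\<in>UNIV. \<Sum>r\<in>UNIV. (y q * M q r * cs r) * ((z r)^2 / 2))"
      by (simp add: distrib_left sum.distrib)
    have e2: "(\<Sum>q\<in>UNIV. \<Sum>r\<in>UNIV. (y q * M q r * cs r) * ((z q)^2 / 2))
       = (\<Sum>q\<in>UNIV. y q * (z q)^2 / 2 * (\<Sum>r\<in>UNIV. M q r * cs r))"
      by (simp add: sum_distrib_left sum_divide_distrib mult_ac)
    have e3: "(\<Sum>q\<in>UNIV. \<Sum>r\<in>UNIV. (y q * M q r * cs r) * ((z r)^2 / 2))
       = (\<Sum>r\<in>UNIV. cs r * (z r)^2 / 2 * (\<Sum>q\<in>UNIV. y q * M q r))"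
      by (subst sum.swap) (simp add: sum_distrib_left sum_divide_distrib mult_ac)
    show ?thesis using e1 e2 e3 by simp
  qed
  also have "\<dots> \<le> (\<Sum>q\<in>UNIV. y q * (z q)^2 / 2 * (cs q - c q))
                  + (\<Sum>r\<in>UNIV. cs r * (z r)^2 / 2 * y r)"
  proof (intro add_mono sum_mono mult_left_mono)
    fix q r
    show "(\<Sum>r\<in>UNIV. M q r * cs r) \<le> cs q - c q" using cs_M[of q] by simp
    show "0 \<le> y q * (z q)^2 / 2" using y_ge1[of q] by simp
    show "(\<Sum>q\<in>UNIV. y q * M q r) \<le> y r" by (rule yM)
    show "0 \<le> cs r * (z r)^2 / 2" using cs_nonneg[of r] by simp
  qed
  also have "\<dots> = (\<Sum>q\<in>UNIV. d q * (E q)^2) - (\<Sum>q\<in>UNIV. w q * (E q)^2)"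
  proof -
    have "y q * (z q)^2 / 2 * (cs q - c q) + cs q * (z q)^2 / 2 * y q = d q * (E q)^2 - w q * (E q)^2" for q
      using cs_pos[of q] unfolding d_def w_def Ez[of q] by (simp add: field_simps power2_eq_square)
    then show ?thesis by (simp add: sum.distrib[symmetric] sum_subtractf[symmetric])
  qed
  finally show ?thesis by simp
qed

end




context qsetup begin

definition upd :: "real \<Rightarrow> ('a \<Rightarrow> real) \<Rightarrow> 'a \<times> 'a list \<Rightarrow> ('a \<Rightarrow> real)" where
  "upd l Q x = Q(fst x := (1 - l) * Q (fst x) + l * (c (fst x) + (\<Sum>j<length (snd x). Q (snd x ! j))))"

definition Ex :: "('a \<times> 'a list \<Rightarrow> real) \<Rightarrow> real" where
  "Ex f = (\<Sum>q\<in>UNIV. pmf sel q * (\<Sum>\<beta>\<in>set_pmf (p q). pmf (p q) \<beta> * f (q, \<beta>)))"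

definition u where "u q = d q / pmf sel q"
definition V where "V Q = (\<Sum>q\<in>UNIV. u q * (Q q - cs q)^2)"

lemma u_pos: "0 < u q" unfolding u_def using d_pos[of q] selpos[of q] by simp

lemma V_nonneg: "0 \<le> V Q" unfolding V_def using u_pos by (intro sum_nonneg) (simp add: less_imp_le)

lemma sum_p1: "(\<Sum>\<beta>\<in>set_pmf (p q). pmf (p q) \<beta>) = 1" by (rule sum_pmf_eq_1) (simp_all add: finp)
lemma sum_sel1: "(\<Sum>q\<in>UNIV. pmf sel q) = 1" by (rule sum_pmf_eq_1) auto

lemma V_upd1: "V (Q(q := a)) = V Q + u q * ((a - cs q)^2 - (Q q - cs q)^2)"
proof -
  have "V (Q(q := a)) = u q * (a - cs q)^2 + (\<Sum>r\<in>UNIV - {q}. u r * (Q r - cs r)^2)"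
    unfolding V_def by (subst sum.remove[of UNIV q]) (auto intro!: sum.cong)
  moreover have "V Q = u q * (Q q - cs q)^2 + (\<Sum>r\<in>UNIV - {q}. u r * (Q r - cs r)^2)"
    unfolding V_def by (subst sum.remove[of UNIV q]) auto
  ultimately show ?thesis by (simp add: algebra_simps)
qed

lemma sq_le_S: fixes E :: "'a \<Rightarrow> real" shows "(E r)^2 \<le> (\<Sum>q\<in>UNIV. (E q)^2)"
  using member_le_sum[of r UNIV "\<lambda>q. (E q)^2"] by simp

lemma abs_le_sqrtS: fixes E :: "'a \<Rightarrow> real" shows "\<bar>E r\<bar> \<le> sqrt (\<Sum>q\<in>UNIV. (E q)^2)"
  using real_sqrt_le_mono[OF sq_le_S[of E r]] by simp

definition Lc where "Lc = (\<Sum>q\<in>UNIV. \<Sum>\<beta>\<in>set_pmf (p q). real (length \<beta>))"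
definition Bc where "Bc = (\<Sum>q\<in>UNIV. \<Sum>\<beta>\<in>set_pmf (p q). \<bar>c q + (\<Sum>j<length \<beta>. cs (\<beta> ! j)) - cs q\<bar>)"

lemma Lc_le: "\<beta> \<in> set_pmf (p q) \<Longrightarrow> real (length \<beta>) \<le> Lc"
proof -
  assume b: "\<beta> \<in> set_pmf (p q)"
  have "real (length \<beta>) \<le> (\<Sum>\<beta>\<in>set_pmf (p q). real (length \<beta>))"
    by (rule member_le_sum) (simp_all add: b finp)
  also have "\<dots> \<le> Lc" unfolding Lc_def by (rule member_le_sum) (auto intro: sum_nonneg)
  finally show ?thesis .
qed

lemma Bc_le: "\<beta> \<in> set_pmf (p q) \<Longrightarrow> \<bar>c q + (\<Sum>j<length \<beta>. cs (\<beta> ! j)) - cs q\<bar> \<le> Bc"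
proof -
  assume b: "\<beta> \<in> set_pmf (p q)"
  have "\<bar>c q + (\<Sum>j<length \<beta>. cs (\<beta> ! j)) - cs q\<bar> \<le> (\<Sum>\<beta>\<in>set_pmf (p q). \<bar>c q + (\<Sum>j<length \<beta>. cs (\<beta> ! j)) - cs q\<bar>)"
    by (rule member_le_sum) (simp_all add: b finp)
  also have "\<dots> \<le> Bc" unfolding Bc_def by (rule member_le_sum) (auto intro: sum_nonneg)
  finally show ?thesis .
qed

lemma Lc_nonneg: "0 \<le> Lc" unfolding Lc_def by (intro sum_nonneg) auto
lemma Bc_nonneg: "0 \<le> Bc" unfolding Bc_def by (intro sum_nonneg) auto

lemma noise_bound:
  assumes b: "\<beta> \<in> set_pmf (p q)"
  shows "(c q + (\<Sum>j<length \<beta>. Q (\<beta> ! j)) - cs q - (Q q - cs q))^2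
     \<le> 2 * (Lc + 1)^2 * (\<Sum>r\<in>UNIV. (Q r - cs r)^2) + 2 * Bc^2"
proof -
  define E where "E r = Q r - cs r" for r
  define S where "S = (\<Sum>r\<in>UNIV. (E r)^2)"
  define s where "s = sqrt S"
  have s0: "0 \<le> s" unfolding s_def S_def by (simp add: sum_nonneg)
  have Es: "\<bar>E r\<bar> \<le> s" for r unfolding s_def S_def by (rule abs_le_sqrtS)
  have eq: "c q + (\<Sum>j<length \<beta>. Q (\<beta> ! j)) - cs q - (Q q - cs q)
     = (c q + (\<Sum>j<length \<beta>. cs (\<beta> ! j)) - cs q) + (\<Sum>j<length \<beta>. E (\<beta> ! j)) - E q"
    unfolding E_def by (simp add: sum_subtractf)
  have "\<bar>\<Sum>j<length \<beta>. E (\<beta> ! j)\<bar> \<le> (\<Sum>j<length \<beta>. \<bar>E (\<beta> ! j)\<bar>)" by (rule sum_abs)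
  also have "\<dots> \<le> (\<Sum>j<length \<beta>. s)" by (intro sum_mono Es)
  also have "\<dots> = real (length \<beta>) * s" by simp
  also have "\<dots> \<le> Lc * s" using Lc_le[OF b] s0 by (rule mult_right_mono)
  finally have t1: "\<bar>\<Sum>j<length \<beta>. E (\<beta> ! j)\<bar> \<le> Lc * s" .
  have "\<bar>(c q + (\<Sum>j<length \<beta>. cs (\<beta> ! j)) - cs q) + (\<Sum>j<length \<beta>. E (\<beta> ! j)) - E q\<bar>
      \<le> Bc + Lc * s + s" using Bc_le[OF b] t1 Es[of q] by linarith
  then have "((c q + (\<Sum>j<length \<beta>. cs (\<beta> ! j)) - cs q) + (\<Sum>j<length \<beta>. E (\<beta> ! j)) - E q)^2
      \<le> (Bc + (Lc + 1) * s)^2"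
    by (intro power2_le_iff_abs_le[THEN iffD2]) (simp_all add: algebra_simps Bc_nonneg Lc_nonneg s0)
  also have "\<dots> \<le> 2 * (Lc + 1)^2 * S + 2 * Bc^2"
  proof -
    have "s^2 = S" unfolding s_def S_def by (simp add: sum_nonneg)
    then have a: "((Lc + 1) * s)^2 = (Lc + 1)^2 * S" by (simp add: power_mult_distrib)
    have b: "0 \<le> (Bc - (Lc + 1) * s)^2" by simp
    have c: "(Bc - (Lc + 1) * s)^2 = Bc^2 - 2 * Bc * ((Lc + 1) * s) + ((Lc + 1) * s)^2" by (simp add: power2_diff)
    have e: "(Bc + (Lc + 1) * s)^2 = Bc^2 + 2 * Bc * ((Lc + 1) * s) + ((Lc + 1) * s)^2" by (simp add: power2_sum)
    show ?thesis using a b c e by linarith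
  qed
  finally show ?thesis unfolding eq S_def E_def .
qed

lemma mean_Z:
  "(\<Sum>\<beta>\<in>set_pmf (p q). pmf (p q) \<beta> * (c q + (\<Sum>j<length \<beta>. Q (\<beta> ! j)) - cs q))
     = (\<Sum>r\<in>UNIV. M q r * (Q r - cs r))"
proof -
  have "(\<Sum>\<beta>\<in>set_pmf (p q). pmf (p q) \<beta> * (c q + (\<Sum>j<length \<beta>. Q (\<beta> ! j)) - cs q))
      = (\<Sum>\<beta>\<in>set_pmf (p q). pmf (p q) \<beta>) * (c q - cs q) + (\<Sum>\<beta>\<in>set_pmf (p q). pmf (p q) \<beta> * (\<Sum>j<length \<beta>. Q (\<beta> ! j)))"
  proof -
    have "pmf (p q) \<beta> * (c q + (\<Sum>j<length \<beta>. Q (\<beta> ! j)) - cs q) = pmf (p q) \<beta> * (c q - cs q) + pmf (p q) \<beta> * (\<Sum>j<length \<beta>. Q (\<beta> ! j))" for \<beta>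
      by (simp add: algebra_simps)
    then show ?thesis by (simp only: sum.distrib sum_distrib_right)
  qed
  also have "\<dots> = (c q - cs q) + (\<Sum>r\<in>UNIV. M q r * Q r)" by (simp add: sum_p1 M_sum)
  also have "\<dots> = (\<Sum>r\<in>UNIV. M q r * (Q r - cs r))"
    using cs_M[of q] by (simp add: algebra_simps sum_subtractf)
  finally show ?thesis .
qed

end




context qsetup begin

lemma drift_raw:
  fixes Q :: "'a \<Rightarrow> real"
  assumes l: "0 \<le> l"
  shows "Ex (\<lambda>x. V (upd l Q x)) \<le> V Q + 2 * l * ((\<Sum>q\<in>UNIV. d q * (Q q - cs q) * (\<Sum>r\<in>UNIV. M q r * (Q r - cs r))) - (\<Sum>q\<in>UNIV. d q * (Q q - cs q)^2))
     + l^2 * (2 * (Lc + 1)^2 * (\<Sum>r\<in>UNIV. (Q r - cs r)^2) + 2 * Bc^2) * (\<Sum>q\<in>UNIV. d q)"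
proof -
  define E where "E r = Q r - cs r" for r
  define K where "K = 2 * (Lc + 1)^2 * (\<Sum>r\<in>UNIV. (Q r - cs r)^2) + 2 * Bc^2"
  define Z where "Z q \<beta> = c q + (\<Sum>j<length \<beta>. Q (\<beta> ! j)) - cs q" for q \<beta>
  define G where "G q = (\<Sum>\<beta>\<in>set_pmf (p q). pmf (p q) \<beta> * (2 * l * E q * (Z q \<beta> - E q) + l^2 * (Z q \<beta> - E q)^2))" for q
  have Vupd: "V (upd l Q (q, \<beta>)) = V Q + u q * (2 * l * E q * (Z q \<beta> - E q) + l^2 * (Z q \<beta> - E q)^2)" for q \<beta>
  proof -
    have "upd l Q (q, \<beta>) = Q(q := (1 - l) * Q q + l * (c q + (\<Sum>j<length \<beta>. Q (\<beta> ! j))))"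
      unfolding upd_def by simp
    moreover have "((1 - l) * Q q + l * (c q + (\<Sum>j<length \<beta>. Q (\<beta> ! j))) - cs q)^2 - (Q q - cs q)^2
        = 2 * l * E q * (Z q \<beta> - E q) + l^2 * (Z q \<beta> - E q)^2"
      unfolding E_def Z_def by (simp add: power2_eq_square algebra_simps)
    ultimately show ?thesis using V_upd1 by simp
  qed
  have inner: "(\<Sum>\<beta>\<in>set_pmf (p q). pmf (p q) \<beta> * V (upd l Q (q, \<beta>))) = V Q + u q * G q" for q
  proof -
    have "(\<Sum>\<beta>\<in>set_pmf (p q). pmf (p q) \<beta> * V (upd l Q (q, \<beta>)))
        = (\<Sum>\<beta>\<in>set_pmf (p q). pmf (p q) \<beta>) * V Q + u q * G q"
      unfolding Vupd G_def by (simp add: distrib_left sum.distrib sum_distrib_left sum_distrib_right mult_ac)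
    then show ?thesis by (simp add: sum_p1)
  qed
  have Gle: "G q \<le> 2 * l * E q * ((\<Sum>r\<in>UNIV. M q r * E r) - E q) + l^2 * K" for q
  proof -
    have "G q = 2 * l * E q * ((\<Sum>\<beta>\<in>set_pmf (p q). pmf (p q) \<beta> * Z q \<beta>) - (\<Sum>\<beta>\<in>set_pmf (p q). pmf (p q) \<beta>) * E q)
        + l^2 * (\<Sum>\<beta>\<in>set_pmf (p q). pmf (p q) \<beta> * (Z q \<beta> - E q)^2)"
      unfolding G_def by (simp add: distrib_left right_diff_distrib sum.distrib sum_distrib_left sum_distrib_right sum_subtractf mult_ac)
    also have "(\<Sum>\<beta>\<in>set_pmf (p q). pmf (p q) \<beta> * Z q \<beta>) = (\<Sum>r\<in>UNIV. M q r * E r)"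
      unfolding Z_def E_def by (rule mean_Z)
    also have "(\<Sum>\<beta>\<in>set_pmf (p q). pmf (p q) \<beta> * (Z q \<beta> - E q)^2) \<le> (\<Sum>\<beta>\<in>set_pmf (p q). pmf (p q) \<beta> * K)"
      unfolding Z_def E_def K_def by (intro sum_mono mult_left_mono noise_bound) simp_all
    also have "(\<Sum>\<beta>\<in>set_pmf (p q). pmf (p q) \<beta> * K) = K" by (simp add: sum_distrib_right[symmetric] sum_p1)
    finally show ?thesis using l by (simp add: sum_p1 mult_left_mono)
  qed
  have "Ex (\<lambda>x. V (upd l Q x)) = (\<Sum>q\<in>UNIV. pmf sel q * (V Q + u q * G q))"
    unfolding Ex_def inner ..
  also have "\<dots> = V Q + (\<Sum>q\<in>UNIV. d q * G q)"
  proof -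
    have "pmf sel q * u q = d q" for q unfolding u_def using selpos[of q] by simp
    then have "(\<Sum>q\<in>UNIV. pmf sel q * (V Q + u q * G q)) = (\<Sum>q\<in>UNIV. pmf sel q) * V Q + (\<Sum>q\<in>UNIV. d q * G q)"
      by (simp add: distrib_left sum.distrib sum_distrib_right mult.assoc[symmetric])
    then show ?thesis by (simp add: sum_sel1)
  qed
  also have "\<dots> \<le> V Q + (\<Sum>q\<in>UNIV. d q * (2 * l * E q * ((\<Sum>r\<in>UNIV. M q r * E r) - E q) + l^2 * K))"
    using d_pos by (intro add_left_mono sum_mono mult_left_mono Gle) (simp add: less_imp_le)
  also have "\<dots> = V Q + 2 * l * ((\<Sum>q\<in>UNIV. d q * E q * (\<Sum>r\<in>UNIV. M q r * E r)) - (\<Sum>q\<in>UNIV. d q * (E q)^2))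
       + l^2 * K * (\<Sum>q\<in>UNIV. d q)"
    by (simp add: distrib_left right_diff_distrib sum.distrib sum_distrib_left sum_distrib_right sum_subtractf power2_eq_square mult_ac)
  finally show ?thesis unfolding E_def K_def .
qed

lemma drift:
  "\<exists>\<delta> C. 0 < \<delta> \<and> \<delta> \<le> 1 \<and> 0 \<le> C \<and>
     (\<forall>l Q. 0 \<le> l \<longrightarrow> Ex (\<lambda>x. V (upd l Q x)) \<le> (1 - \<delta> * l) * V Q + C * l^2 * (V Q + 1))"
proof -
  define \<delta>0 where "\<delta>0 = Min (range (\<lambda>q. w q / u q))"
  have \<delta>0: "0 < \<delta>0" unfolding \<delta>0_def using w_pos u_pos by (subst Min_gr_iff) auto
  have \<delta>0le: "\<delta>0 * u q \<le> w q" for q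
  proof -
    have "\<delta>0 \<le> w q / u q" unfolding \<delta>0_def by (rule Min_le) auto
    then show ?thesis using u_pos[of q] by (simp add: pos_le_divide_eq)
  qed
  define U where "U = (\<Sum>q\<in>UNIV. 1 / u q)"
  define Ds where "Ds = (\<Sum>q\<in>UNIV. d q)"
  have U0: "0 \<le> U" unfolding U_def using u_pos by (intro sum_nonneg) (simp add: less_imp_le)
  have Ds0: "0 \<le> Ds" unfolding Ds_def using d_pos by (intro sum_nonneg) (simp add: less_imp_le)
  define C where "C = 2 * (Lc + 1)^2 * U * Ds + 2 * Bc^2 * Ds"
  define \<delta> where "\<delta> = min 1 (2 * \<delta>0)"
  have C0: "0 \<le> C" unfolding C_def using U0 Ds0 by simp
  show ?thesis
  proof (intro exI conjI allI impI)
    show "0 < \<delta>" "\<delta> \<le> 1" unfolding \<delta>_def using \<delta>0 by auto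
    show "0 \<le> C" by (rule C0)
    fix l :: real and Q :: "'a \<Rightarrow> real" assume l: "0 \<le> l"
    define E where "E r = Q r - cs r" for r
    define S where "S = (\<Sum>r\<in>UNIV. (E r)^2)"
    have VE: "V Q = (\<Sum>q\<in>UNIV. u q * (E q)^2)" unfolding V_def E_def ..
    have SV: "S \<le> U * V Q"
    proof -
      have "(E q)^2 \<le> V Q * (1 / u q)" for q
      proof -
        have "u q * (E q)^2 \<le> V Q" unfolding VE
          using u_pos by (intro member_le_sum[of q UNIV "\<lambda>q. u q * (E q)^2", simplified]) (simp add: less_imp_le)
        then show ?thesis using u_pos[of q] by (simp add: field_simps)
      qed
      then have "S \<le> (\<Sum>q\<in>UNIV. V Q * (1 / u q))" unfolding S_def by (intro sum_mono)
      then show ?thesis unfolding U_def by (simp add: sum_distrib_left mult.commute)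
    qed
    have wV: "\<delta>0 * V Q \<le> (\<Sum>q\<in>UNIV. w q * (E q)^2)"
      unfolding VE sum_distrib_left by (intro sum_mono) (simp add: mult.assoc[symmetric] mult_right_mono \<delta>0le)
    have quadE: "(\<Sum>q\<in>UNIV. d q * E q * (\<Sum>r\<in>UNIV. M q r * E r)) - (\<Sum>q\<in>UNIV. d q * (E q)^2) \<le> - (\<delta>0 * V Q)"
      using quad[of E] wV by linarith
    have t1: "2 * l * ((\<Sum>q\<in>UNIV. d q * E q * (\<Sum>r\<in>UNIV. M q r * E r)) - (\<Sum>q\<in>UNIV. d q * (E q)^2)) \<le> - (\<delta> * l * V Q)"
    proof -
      have "2 * l * ((\<Sum>q\<in>UNIV. d q * E q * (\<Sum>r\<in>UNIV. M q r * E r)) - (\<Sum>q\<in>UNIV. d q * (E q)^2)) \<le> 2 * l * (- (\<delta>0 * V Q))"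
        using l quadE by (intro mult_left_mono) simp_all
      also have "\<dots> \<le> - (\<delta> * l * V Q)"
      proof -
        have "\<delta> \<le> 2 * \<delta>0" unfolding \<delta>_def by simp
        then have "\<delta> * (l * V Q) \<le> 2 * \<delta>0 * (l * V Q)" using l V_nonneg[of Q] by (intro mult_right_mono) simp_all
        then show ?thesis by (simp add: mult_ac)
      qed
      finally show ?thesis .
    qed
    have t2: "l^2 * (2 * (Lc + 1)^2 * S + 2 * Bc^2) * Ds \<le> C * l^2 * (V Q + 1)"
    proof -
      have "(2 * (Lc + 1)^2 * S + 2 * Bc^2) * Ds \<le> (2 * (Lc + 1)^2 * (U * V Q) + 2 * Bc^2) * Ds"
        using SV Ds0 by (intro mult_right_mono add_right_mono mult_left_mono) simp_all
      also have "\<dots> \<le> C * (V Q + 1)" unfolding C_def using U0 Ds0 V_nonneg[of Q] Bc_nonneg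
        by (simp add: algebra_simps)
      finally have "l^2 * ((2 * (Lc + 1)^2 * S + 2 * Bc^2) * Ds) \<le> l^2 * (C * (V Q + 1))"
        by (rule mult_left_mono) simp
      then show ?thesis by (simp add: mult_ac)
    qed
    have "Ex (\<lambda>x. V (upd l Q x)) \<le> V Q + 2 * l * ((\<Sum>q\<in>UNIV. d q * E q * (\<Sum>r\<in>UNIV. M q r * E r)) - (\<Sum>q\<in>UNIV. d q * (E q)^2))
       + l^2 * (2 * (Lc + 1)^2 * S + 2 * Bc^2) * Ds"
      using drift_raw[OF l, of Q] unfolding E_def S_def Ds_def .
    also have "\<dots> \<le> V Q - \<delta> * l * V Q + C * l^2 * (V Q + 1)" using t1 t2 by linarith
    also have "\<dots> = (1 - \<delta> * l) * V Q + C * l^2 * (V Q + 1)" by (simp add: algebra_simps)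
    finally show "Ex (\<lambda>x. V (upd l Q x)) \<le> (1 - \<delta> * l) * V Q + C * l^2 * (V Q + 1)" .
  qed
qed

end




lemma Qlearn_prefix:
  "(\<And>k. k < j \<Longrightarrow> \<omega> !! k = \<omega>' !! k) \<Longrightarrow> Qlearn lr c Q0 \<omega> j = Qlearn lr c Q0 \<omega>' j"
  by (induction j) (simp_all add: Let_def)

definition Fp where "Fp lr c Q0 j xs = Qlearn lr c Q0 (xs @- sconst undefined) j"

lemma Fp_stake: "Qlearn lr c Q0 \<omega> j = Fp lr c Q0 j (stake j \<omega>)"
  unfolding Fp_def by (rule Qlearn_prefix) simp

context qsetup begin

lemma Qlearn_Suc: "Qlearn lr c Q0 \<omega> (Suc i) = upd (lr i) (Qlearn lr c Q0 \<omega> i) (\<omega> !! i)"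
  by (simp add: upd_def Let_def)

lemma Fp_snoc: "length xs = k \<Longrightarrow> Fp lr c Q0 (Suc k) (xs @ [x]) = upd (lr k) (Fp lr c Q0 k xs) x"
proof -
  assume k: "length xs = k"
  have "Fp lr c Q0 (Suc k) (xs @ [x]) = upd (lr k) (Qlearn lr c Q0 ((xs @ [x]) @- sconst undefined) k) x"
    unfolding Fp_def Qlearn_Suc using k by simp
  also have "Qlearn lr c Q0 ((xs @ [x]) @- sconst undefined) k = Fp lr c Q0 k xs"
    unfolding Fp_def using k by (intro Qlearn_prefix) (simp add: nth_append)
  finally show ?thesis .
qed

lemma set_sel: "set_pmf sel = UNIV" using selpos by (auto simp: set_pmf_iff less_imp_neq[symmetric])

lemma nnEx:
  assumes f: "\<And>x. 0 \<le> f x"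
  shows "(\<integral>\<^sup>+x. ennreal (f x) \<partial>measure_pmf (step_dist sel p)) = ennreal (Ex f)"
proof -
  have inner: "(\<integral>\<^sup>+\<beta>. ennreal (f (q, \<beta>)) \<partial>measure_pmf (p q)) = ennreal (\<Sum>\<beta>\<in>set_pmf (p q). pmf (p q) \<beta> * f (q, \<beta>))" for q
    by (subst nn_integral_measure_pmf_finite[OF finp]) (simp_all add: f ennreal_mult[symmetric] mult.commute)
  have "(\<integral>\<^sup>+x. ennreal (f x) \<partial>measure_pmf (step_dist sel p))
     = (\<integral>\<^sup>+q. ennreal (\<Sum>\<beta>\<in>set_pmf (p q). pmf (p q) \<beta> * f (q, \<beta>)) \<partial>measure_pmf sel)"
    unfolding step_dist_def by (simp add: inner)
  also have "\<dots> = ennreal (Ex f)"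
    by (subst nn_integral_measure_pmf_finite) 
       (simp_all add: set_sel Ex_def f ennreal_mult[symmetric] mult.commute sum_nonneg)
  finally show ?thesis .
qed

lemma Ex_affine: "Ex (\<lambda>x. a * g x + b) = a * Ex g + b"
proof -
  have "Ex (\<lambda>x. a * g x + b) = (\<Sum>q\<in>UNIV. pmf sel q * (a * (\<Sum>\<beta>\<in>set_pmf (p q). pmf (p q) \<beta> * g (q, \<beta>)) + b * (\<Sum>\<beta>\<in>set_pmf (p q). pmf (p q) \<beta>)))"
    unfolding Ex_def by (simp add: distrib_left sum.distrib sum_distrib_left sum_distrib_right mult_ac)
  also have "\<dots> = a * Ex g + b * (\<Sum>q\<in>UNIV. pmf sel q)"
    unfolding Ex_def sum_p1 by (simp add: distrib_left sum.distrib sum_distrib_left sum_distrib_right mult_ac)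
  finally show ?thesis by (simp add: sum_sel1)
qed

lemma Ex_nonneg: "(\<And>x. 0 \<le> g x) \<Longrightarrow> 0 \<le> Ex g"
  unfolding Ex_def by (intro sum_nonneg mult_nonneg_nonneg) auto

end




theorem theorem5:
  fixes p :: "'a::finite \<Rightarrow> 'a list pmf" and c :: "'a \<Rightarrow> real"
    and lr :: "nat \<Rightarrow> real" and sel :: "'a pmf" and pmin :: real and Q0 :: "'a \<Rightarrow> real"
  assumes "bmc p c"
    and "\<forall>q. cstar p c q < \<infinity>"
    and "\<forall>i. 0 \<le> lr i \<and> lr i \<le> 1"
    and "\<not> summable lr"
    and "summable (\<lambda>i. (lr i)\<^sup>2)"
    and "pmin > 0" and "\<forall>q. pmf sel q \<ge> pmin"
    and "\<forall>q. Q0 q \<ge> 0"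
  shows "AE \<omega> in stream_space (measure_pmf (step_dist sel p)).
           \<forall>q. (\<lambda>i. Qlearn lr c Q0 \<omega> i q) \<longlonglongrightarrow> enn2real (cstar p c q)"
proof -
  note bmc = assms(1) and fin = assms(2) and lr01 = assms(3) and ns = assms(4) and s2 = assms(5)
  have lr0: "0 \<le> lr i" and lr1: "lr i \<le> 1" for i using lr01 by auto
  have selpos: "0 < pmf sel q" for q using assms(6,7) by (meson less_le_trans)
  interpret qsetup p c sel using bmc fin selpos by unfold_locales auto
  obtain \<delta> C where \<delta>: "0 < \<delta>" "\<delta> \<le> 1" and C0: "0 \<le> C"
    and dr: "\<And>l Q. 0 \<le> l \<Longrightarrow> Ex (\<lambda>x. V (upd l Q x)) \<le> (1 - \<delta> * l) * V Q + C * l^2 * (V Q + 1)"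
    using drift by blast
  define D where "D = step_dist sel p"
  define S where "S = stream_space (measure_pmf D)"
  define F where "F = Fp lr c Q0"
  define a where "a k = C * (lr k)^2" for k
  have a0: "0 \<le> a k" for k unfolding a_def using C0 by simp
  have sa: "summable a" unfolding a_def using s2 by (intro summable_mult) simp
  define P where "P j = (\<Prod>k<j. 1 + a k)" for j
  define T where "T j = (\<Sum>i. a (i + j))" for j
  have P1: "1 \<le> P j" for j unfolding P_def using a0 by (intro prod_ge_1) simp
  have P0: "0 < P j" for j using P1[of j] by simp
  have PSuc: "P (Suc j) = P j * (1 + a j)" for j unfolding P_def by simp
  define Pm where "Pm = exp (\<Sum>k. a k)"
  have Pm: "P j \<le> Pm" for j
  proof -
    have "P j \<le> (\<Prod>k<j. exp (a k))" unfolding P_def using a0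
      by (intro prod_mono) (simp add: add.commute exp_ge_add_one_self add_nonneg_nonneg)
    also have "\<dots> = exp (\<Sum>k<j. a k)" by (simp add: exp_sum)
    also have "\<dots> \<le> Pm" unfolding Pm_def using sum_le_suminf[OF sa, of "{..<j}"] a0 by simp
    finally show ?thesis .
  qed
  have T0: "0 \<le> T j" for j unfolding T_def using a0 by (intro suminf_nonneg summable_ignore_initial_segment sa) 
  have TSuc: "T j = a j + T (Suc j)" for j
  proof -
    have "(\<Sum>i. a (Suc i + j)) = (\<Sum>i. a (i + j)) - a (0 + j)"
      by (rule suminf_split_head[of "\<lambda>i. a (i + j)"]) (rule summable_ignore_initial_segment[OF sa])
    then show ?thesis unfolding T_def by simp
  qed
  have Tlim: "T \<longlonglongrightarrow> 0" unfolding T_def by (rule suminf_exist_split2[OF sa])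
  define X where "X j xs = ennreal (V (F j xs) / P j + T j)" for j xs

  have sup: "(\<integral>\<^sup>+x. X (Suc k) (xs @ [x]) \<partial>measure_pmf D) \<le> X k xs" if "length xs = k" for k xs
  proof -
    define Qk where "Qk = F k xs"
    have "(\<integral>\<^sup>+x. X (Suc k) (xs @ [x]) \<partial>measure_pmf D)
        = (\<integral>\<^sup>+x. ennreal ((1 / P (Suc k)) * V (upd (lr k) Qk x) + T (Suc k)) \<partial>measure_pmf D)"
      unfolding X_def F_def Qk_def using that by (simp add: qsetup.Fp_snoc[OF qsetup_axioms])
    also have "\<dots> = ennreal (Ex (\<lambda>x. (1 / P (Suc k)) * V (upd (lr k) Qk x) + T (Suc k)))"
      unfolding D_def by (intro nnEx add_nonneg_nonneg mult_nonneg_nonneg divide_nonneg_nonneg V_nonneg T0 less_imp_le[OF P0] zero_le_one)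
    also have "\<dots> = ennreal ((1 / P (Suc k)) * Ex (\<lambda>x. V (upd (lr k) Qk x)) + T (Suc k))"
      by (subst Ex_affine) (rule refl)
    also have "\<dots> \<le> ennreal (V Qk / P k + T k)"
    proof (rule ennreal_leI)
      have "Ex (\<lambda>x. V (upd (lr k) Qk x)) \<le> (1 - \<delta> * lr k) * V Qk + C * (lr k)^2 * (V Qk + 1)"
        by (rule dr[OF lr0])
      also have "\<dots> \<le> (1 + a k) * V Qk + a k"
        using \<delta> lr0[of k] V_nonneg[of Qk] unfolding a_def by (simp add: algebra_simps)
      finally have E1: "Ex (\<lambda>x. V (upd (lr k) Qk x)) \<le> (1 + a k) * V Qk + a k" .
      have "(1 / P (Suc k)) * Ex (\<lambda>x. V (upd (lr k) Qk x)) \<le> ((1 + a k) * V Qk + a k) / P (Suc k)"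
        using E1 P0[of "Suc k"] by (simp add: divide_right_mono)
      also have "\<dots> = V Qk / P k + a k / P (Suc k)"
      proof -
        have ne: "1 + a k \<noteq> 0" using a0[of k] by simp
        have "((1 + a k) * V Qk + a k) / (P k * (1 + a k)) = (1 + a k) * V Qk / (P k * (1 + a k)) + a k / (P k * (1 + a k))"
          by (rule add_divide_distrib)
        also have "(1 + a k) * V Qk / (P k * (1 + a k)) = V Qk / P k" using ne by simp
        finally show ?thesis unfolding PSuc .
      qed
      also have "\<dots> \<le> V Qk / P k + a k"
        using P1[of "Suc k"] a0[of k] by (simp add: divide_le_eq mult_le_cancel_left1)
      finally show "(1 / P (Suc k)) * Ex (\<lambda>x. V (upd (lr k) Qk x)) + T (Suc k) \<le> V Qk / P k + T k"
        using TSuc[of k] by simp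
    qed
    also have "\<dots> = X k xs" unfolding X_def Qk_def ..
    finally show ?thesis .
  qed

  define ev where "ev n = (\<integral>\<^sup>+\<omega>. ennreal (V (F n (stake n \<omega>))) \<partial>S)" for n
  have meas: "(\<lambda>\<omega>. h (stake n \<omega>)) \<in> borel_measurable S" for h :: "('a \<times> 'a list) list \<Rightarrow> ennreal" and n
    unfolding S_def by (rule stake_borel)
  have ev_rec: "ev (Suc n) \<le> ennreal (1 - \<delta> * lr n + C * (lr n)^2) * ev n + ennreal (C * (lr n)^2)" for n
  proof -
    have al: "0 \<le> 1 - \<delta> * lr n + C * (lr n)^2"
      using mult_le_one[of \<delta> "lr n"] \<delta> lr0[of n] lr1[of n] C0 by (smt (verit) mult_nonneg_nonneg zero_le_power2)
    have "ev (Suc n) = (\<integral>\<^sup>+\<omega>. (\<integral>\<^sup>+x. ennreal (V (F (Suc n) (stake n \<omega> @ [x]))) \<partial>measure_pmf D) \<partial>S)"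
      unfolding ev_def S_def by (rule L1)
    also have "\<dots> = (\<integral>\<^sup>+\<omega>. ennreal (Ex (\<lambda>x. V (upd (lr n) (F n (stake n \<omega>)) x))) \<partial>S)"
      unfolding F_def D_def by (intro nn_integral_cong) (simp add: qsetup.Fp_snoc[OF qsetup_axioms] nnEx V_nonneg)
    also have "\<dots> \<le> (\<integral>\<^sup>+\<omega>. ennreal (1 - \<delta> * lr n + C * (lr n)^2) * ennreal (V (F n (stake n \<omega>))) + ennreal (C * (lr n)^2) \<partial>S)"
    proof (rule nn_integral_mono)
      fix \<omega>
      have "Ex (\<lambda>x. V (upd (lr n) (F n (stake n \<omega>)) x)) \<le> (1 - \<delta> * lr n + C * (lr n)^2) * V (F n (stake n \<omega>)) + C * (lr n)^2"
        using dr[OF lr0, of n "F n (stake n \<omega>)"] by (simp add: algebra_simps)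
      then show "ennreal (Ex (\<lambda>x. V (upd (lr n) (F n (stake n \<omega>)) x))) \<le> ennreal (1 - \<delta> * lr n + C * (lr n)^2) * ennreal (V (F n (stake n \<omega>))) + ennreal (C * (lr n)^2)"
        using al V_nonneg C0 by (simp add: ennreal_mult[symmetric] ennreal_plus[symmetric] del: ennreal_plus)
    qed
    also have "\<dots> = ennreal (1 - \<delta> * lr n + C * (lr n)^2) * ev n + ennreal (C * (lr n)^2)"
      unfolding ev_def S_def
      apply (subst nn_integral_add)
        apply (auto intro!: measurable_compose[OF stake_meas])[2]
      apply (subst nn_integral_cmult)
       apply (rule stake_borel[where h="\<lambda>xs. ennreal (V (F n xs))" and k=n])
      apply simp
      done
    finally show ?thesis .
  qed
  have ev_fin: "ev n < \<infinity>" for n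
  proof (induction n)
    case 0 then show ?case by (simp add: ev_def S_def)
  next
    case (Suc n)
    have "ennreal (1 - \<delta> * lr n + C * (lr n)^2) * ev n + ennreal (C * (lr n)^2) < \<infinity>"
      using Suc by (simp add: ennreal_mult_less_top)
    then show ?case using ev_rec[of n] by (rule le_less_trans[rotated])
  qed
  define e where "e n = enn2real (ev n)" for n
  have eev: "ev n = ennreal (e n)" for n unfolding e_def using ev_fin[of n] by simp
  have e0: "0 \<le> e n" for n unfolding e_def by simp
  have e_rec: "e (Suc n) \<le> (1 - \<delta> * lr n) * e n + C * (lr n)^2 * (e n + 1)" for n
  proof -
    have al: "0 \<le> 1 - \<delta> * lr n + C * (lr n)^2"
      using mult_le_one[of \<delta> "lr n"] \<delta> lr0[of n] lr1[of n] C0 by (smt (verit) mult_nonneg_nonneg zero_le_power2)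
    have "ennreal (e (Suc n)) \<le> ennreal ((1 - \<delta> * lr n + C * (lr n)^2) * e n + C * (lr n)^2)"
      using ev_rec[of n] al e0[of n] C0 unfolding eev by (simp add: ennreal_mult[symmetric] ennreal_plus[symmetric] del: ennreal_plus)
    then have "e (Suc n) \<le> (1 - \<delta> * lr n + C * (lr n)^2) * e n + C * (lr n)^2"
      using al e0[of n] C0 by (subst (asm) ennreal_le_iff) simp_all
    then show ?thesis by (simp add: algebra_simps)
  qed
  have elim: "e \<longlonglongrightarrow> 0" by (rule det_conv[OF e0 lr0 lr1 ns s2 \<delta> C0 e_rec])

  have EX: "(\<integral>\<^sup>+\<omega>. X n (stake n \<omega>) \<partial>S) = ennreal (e n / P n + T n)" for n
  proof -
    have "(\<integral>\<^sup>+\<omega>. X n (stake n \<omega>) \<partial>S) = (\<integral>\<^sup>+\<omega>. ennreal (1 / P n) * ennreal (V (F n (stake n \<omega>))) + ennreal (T n) \<partial>S)"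
      unfolding X_def using P0[of n] T0[of n] V_nonneg
      by (intro nn_integral_cong) (simp add: ennreal_mult[symmetric] ennreal_plus[symmetric] del: ennreal_plus)
    also have "\<dots> = ennreal (1 / P n) * ev n + ennreal (T n)"
      unfolding ev_def S_def
      apply (subst nn_integral_add)
        apply (auto intro!: measurable_compose[OF stake_meas])[2]
      apply (subst nn_integral_cmult)
       apply (rule stake_borel[where h="\<lambda>xs. ennreal (V (F n xs))" and k=n])
      apply simp
      done
    also have "\<dots> = ennreal (e n / P n + T n)"
      unfolding eev using P0[of n] T0[of n] e0[of n] by (simp add: ennreal_mult[symmetric] ennreal_plus[symmetric] del: ennreal_plus)
    finally show ?thesis .
  qed
  have EXlim: "(\<lambda>n. \<integral>\<^sup>+\<omega>. X n (stake n \<omega>) \<partial>S) \<longlonglongrightarrow> 0"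
  proof -
    have "(\<lambda>n. e n / P n) \<longlonglongrightarrow> 0"
    proof (rule tendsto_sandwich[OF _ _ tendsto_const elim])
      show "\<forall>\<^sub>F n in sequentially. 0 \<le> e n / P n" using e0 P0 by (simp add: less_imp_le)
      show "\<forall>\<^sub>F n in sequentially. e n / P n \<le> e n"
      proof (intro always_eventually allI)
        fix n show "e n / P n \<le> e n" using divide_left_mono[of 1 "P n" "e n"] e0[of n] P1[of n] by simp
      qed
    qed
    then have "(\<lambda>n. e n / P n + T n) \<longlonglongrightarrow> 0 + 0" using Tlim by (rule tendsto_add)
    then have "(\<lambda>n. ennreal (e n / P n + T n)) \<longlonglongrightarrow> ennreal 0" by (intro tendsto_ennrealI) simp
    then show ?thesis unfolding EX by simp
  qed
  have AEX: "AE \<omega> in S. (\<lambda>j. X j (stake j \<omega>)) \<longlonglongrightarrow> 0"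
    unfolding S_def by (rule ae_conv[where D=D and f=X, OF sup]) (assumption, rule EXlim[unfolded S_def])
  show ?thesis
  proof (rule AE_mp[OF AEX[unfolded S_def D_def]], intro AE_I2 impI allI)
    fix \<omega> q
    assume conv: "(\<lambda>j. X j (stake j \<omega>)) \<longlonglongrightarrow> 0"
    define W where "W j = V (F j (stake j \<omega>))" for j
    have W0: "0 \<le> W j" for j unfolding W_def by (rule V_nonneg)
    have "(\<lambda>j. W j / P j + T j) \<longlonglongrightarrow> 0"
    proof -
      have nn: "0 \<le> W j / P j + T j" for j using W0[of j] P0[of j] T0[of j] by simp
      show ?thesis using conv unfolding X_def W_def[symmetric] by (subst (asm) ennreal_tendsto_0_iff) (simp_all add: nn)
    qed
    then have WP: "(\<lambda>j. W j / P j) \<longlonglongrightarrow> 0"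
      by (rule tendsto_sandwich[rotated 2, OF tendsto_const]) (simp_all add: W0 P0 T0 less_imp_le)
    have Wl: "W \<longlonglongrightarrow> 0"
    proof (rule tendsto_sandwich[OF _ _ tendsto_const])
      show "\<forall>\<^sub>F n in sequentially. 0 \<le> W n" by (simp add: W0)
      show "\<forall>\<^sub>F n in sequentially. W n \<le> Pm * (W n / P n)"
      proof (intro always_eventually allI)
        fix n
        have "W n = P n * (W n / P n)" using P0[of n] by simp
        also have "\<dots> \<le> Pm * (W n / P n)" using Pm[of n] W0[of n] P0[of n] by (intro mult_right_mono) simp_all
        finally show "W n \<le> Pm * (W n / P n)" .
      qed
      show "(\<lambda>n. Pm * (W n / P n)) \<longlonglongrightarrow> 0" using tendsto_mult_right_zero[OF WP] by simp
    qed
    have sq: "(\<lambda>j. (F j (stake j \<omega>) q - cs q)^2) \<longlonglongrightarrow> 0"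
    proof (rule tendsto_sandwich[OF _ _ tendsto_const])
      show "\<forall>\<^sub>F n in sequentially. 0 \<le> (F n (stake n \<omega>) q - cs q)^2" by simp
      show "\<forall>\<^sub>F n in sequentially. (F n (stake n \<omega>) q - cs q)^2 \<le> W n / u q"
      proof (intro always_eventually allI)
        fix n
        have "u q * (F n (stake n \<omega>) q - cs q)^2 \<le> W n" unfolding W_def V_def
          using u_pos by (intro member_le_sum[of q UNIV "\<lambda>r. u r * (F n (stake n \<omega>) r - cs r)^2", simplified]) (simp add: less_imp_le)
        then show "(F n (stake n \<omega>) q - cs q)^2 \<le> W n / u q" using u_pos[of q] by (simp add: field_simps)
      qed
      show "(\<lambda>n. W n / u q) \<longlonglongrightarrow> 0" using tendsto_divide_zero[OF Wl] by simp
    qed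
    have "(\<lambda>j. \<bar>F j (stake j \<omega>) q - cs q\<bar>) \<longlonglongrightarrow> 0"
      using tendsto_real_sqrt[OF sq] by simp
    then have "(\<lambda>j. F j (stake j \<omega>) q - cs q) \<longlonglongrightarrow> 0" by (simp add: tendsto_rabs_zero_iff)
    then have "(\<lambda>j. F j (stake j \<omega>) q) \<longlonglongrightarrow> cs q" by (simp add: LIM_zero_iff)
    then show "(\<lambda>i. Qlearn lr c Q0 \<omega> i q) \<longlonglongrightarrow> enn2real (cstar p c q)"
      unfolding F_def Fp_stake[symmetric] cs_def .
  qed
qed



end
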